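(* For any integer $d\ge 841$ there exists a polynomial $f\in\mathbb{Z}[x]$ of degree at most $d\log d$ and height $H(f)\le\exp(2d\log d)$ whose minimal-degree binomial multiple $x^m-a$ (with $a\in\mathbb{Q}$) satisfies $m>\exp(\sqrt d)$ and $H(a)>2^{\exp(\sqrt d)}$.
   Context: $\log$ denotes the natural logarithm. A binomial multiple of $f$ is a multiple of $f$ in $\mathbb{Q}[x]$ of the form $x^m-a$ with $m\ge1$ and $a\in\mathbb{Q}$. Height of a polynomial: for nonzero $f\in\mathbb{Q}[x]$, let $r$ be the least positive rational with $rf\in\mathbb{Z}[x]$; if $rf=\sum_i a_ix^{e_i}$ with $a_i\in\mathbb{Z}$, then $H(f)=\max_i|a_i|$. For a nonzero rational number $a=p/q$ in lowest terms, $H(a)=\max(|p|,|q|)$. *)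

theory Defs
  imports Complex_Main "HOL-Computational_Algebra.Polynomial"
begin

definition poly_height :: "rat poly \<Rightarrow> rat" where
  "poly_height f =
     (let r = (LEAST r::rat. 0 < r \<and> (\<forall>i. coeff (smult r f) i \<in> \<int>))
      in Max (abs ` set (coeffs (smult r f))))"

definition rat_height :: "rat \<Rightarrow> int" where
  "rat_height a = (case quotient_of a of (p, q) \<Rightarrow> max \<bar>p\<bar> \<bar>q\<bar>)"

definition binomial_multiple :: "rat poly \<Rightarrow> nat \<Rightarrow> rat \<Rightarrow> bool" where
  "binomial_multiple f m a \<longleftrightarrow> m \<ge> 1 \<and> f dvd (monom 1 m - [:a:])"

end

theory Submission
  imports Defs "HOL-Computational_Algebra.Computational_Algebra" "HOL-Computational_Algebra.Field_as_Ring" "HOL-Library.Real_Mod"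
begin

fun gp :: "nat \<Rightarrow> 'a::comm_ring_1 poly" where
  "gp 0 = 0"
| "gp (Suc k) = monom 1 k + smult 2 (gp k)"

lemma gp_ident: "[:-2, 1:] * (gp k :: 'a::comm_ring_1 poly) = monom 1 k - [:2^k:]"
proof (induction k)
  case 0 then show ?case by simp
next
  case (Suc k)
  have "[:-2, 1:] * (gp (Suc k) :: 'a poly) = [:-2,1:] * monom 1 k + smult 2 ([:-2,1:] * gp k)"
    by (simp add: distrib_left)
  also have "[:-2,1:] * monom 1 k = monom (1::'a) (Suc k) - smult 2 (monom 1 k)"
    by (rule poly_eqI) (auto simp: coeff_monom coeff_pCons monom_Suc split: nat.splits)
  also have "monom (1::'a) (Suc k) - smult 2 (monom 1 k) + smult 2 ([:-2,1:] * gp k) = monom 1 (Suc k) - [:2 ^ Suc k:]"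
    unfolding Suc
    by (rule poly_eqI) (auto simp: coeff_monom algebra_simps coeff_pCons split: nat.split)
  finally show ?case .
qed

lemma coeff_gp: "coeff (gp k :: 'a::comm_ring_1 poly) i = (if i < k then 2 ^ (k - 1 - i) else 0)"
proof (induction k arbitrary: i)
  case 0 then show ?case by simp
next
  case (Suc k)
  show ?case
  proof (cases "i < k")
    case True
    then have "2 * (2::'a) ^ (k - Suc i) = 2 ^ (k - i)"
      by (metis Suc_diff_Suc power_Suc)
    then show ?thesis using True by (simp add: Suc coeff_monom)
  qed (auto simp: Suc coeff_monom)
qed

lemma degree_gp: "degree (gp (Suc k) :: 'a::{comm_ring_1,ring_char_0} poly) = k"
  by (rule le_antisym[OF degree_le le_degree]) (auto simp: coeff_gp)

lemma lead_coeff_gp: "lead_coeff (gp (Suc k) :: 'a::{comm_ring_1,ring_char_0} poly) = 1"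
  by (subst degree_gp) (simp add: coeff_gp del: gp.simps)

lemma map_of_int_gp: "map_poly of_int (gp k) = (gp k :: 'a::{comm_ring_1} poly)"
  by (rule poly_eqI) (simp add: coeff_map_poly coeff_gp)

lemma map_of_rat_gp: "map_poly of_rat (gp k :: rat poly) = (gp k :: 'a::{field_char_0} poly)"
  by (rule poly_eqI) (simp add: coeff_map_poly coeff_gp of_rat_power)

lemma poly_gp_2: "poly (gp k :: 'a::comm_ring_1 poly) 2 * 2 = of_nat k * 2 ^ k"
  by (induction k) (auto simp: poly_monom algebra_simps)

lemma poly_gp_root: "poly (gp k :: 'a::comm_ring_1 poly) z * (z - 2) = z ^ k - 2 ^ k"
proof -
  have "poly ([:-2, 1:] * (gp k :: 'a poly)) z = poly (monom 1 k - [:2^k:]) z"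
    by (simp only: gp_ident)
  then show ?thesis by (simp add: poly_monom algebra_simps)
qed

lemma gp_coeff_nonneg: "coeff (gp k :: int poly) i \<ge> 0"
  by (simp add: coeff_gp)

lemma map_of_int_mult: "map_poly (of_int :: int \<Rightarrow> 'a::comm_ring_1) (p * q) = map_poly of_int p * map_poly of_int q"
  by (rule poly_eqI) (simp add: coeff_map_poly coeff_mult)

lemma map_of_rat_mult: "map_poly (of_rat :: rat \<Rightarrow> 'a::field_char_0) (p * q) = map_poly of_rat p * map_poly of_rat q"
  by (rule poly_eqI) (simp add: coeff_map_poly coeff_mult of_rat_sum of_rat_mult)

lemma map_of_int_prod: "map_poly (of_int :: int \<Rightarrow> 'a::comm_ring_1) (\<Prod>x\<in>A. f x) = (\<Prod>x\<in>A. map_poly of_int (f x))"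
  by (induction A rule: infinite_finite_induct) (auto simp: map_of_int_mult)

lemma gp_nz: "k > 0 \<Longrightarrow> (gp k :: 'a::{comm_ring_1,ring_char_0} poly) \<noteq> 0"
proof -
  assume "k > 0"
  then obtain j where "k = Suc j" using gr0_conv_Suc by blast
  then show ?thesis using lead_coeff_gp[of j, where 'a='a] by (auto simp del: gp.simps)
qed

lemma unity_coprime:
  fixes w :: complex
  assumes "coprime a b" "a > 0" "w ^ a = 1" "w ^ b = 1"
  shows "w = 1"
proof -
  from bezout_nat[of a b] assms obtain x y where xy: "a * x = b * y + 1" by auto
  have "1 = (w ^ a) ^ x" using assms by simp
  also have "\<dots> = w ^ (b * y + 1)" by (metis power_mult xy)
  also have "\<dots> = (w ^ b) ^ y * w" by (simp only: power_add power_mult power_one_right)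
  also have "\<dots> = w" using assms by simp
  finally show ?thesis by simp
qed

lemma gp_root_pow:
  fixes z :: complex
  assumes "poly (gp k) z = 0" "k > 0"
  shows "(z / 2) ^ k = 1"
proof -
  have "z \<noteq> 2"
  proof
    assume "z = 2"
    then have "of_nat k * 2 ^ k = (0::complex)" using poly_gp_2[of k, where 'a=complex] assms by simp
    then show False using assms by simp
  qed
  have "z ^ k - 2 ^ k = 0" using poly_gp_root[of k z] assms by simp
  then show ?thesis by (simp add: power_divide)
qed

lemma gp_coprime:
  assumes "coprime a b" "a > 0" "b > 0"
  shows "coprime (gp a :: rat poly) (gp b)"
proof (rule coprimeI)
  fix c :: "rat poly" assume ca: "c dvd gp a" and cb: "c dvd gp b"
  show "is_unit c"
  proof (rule ccontr)
    assume nu: "\<not> is_unit c"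
    have "c \<noteq> 0" using ca gp_nz[of a, where 'a=rat] assms by auto
    then have dc: "degree c \<noteq> 0" using nu is_unit_iff_degree by blast
    define C where "C = (map_poly of_rat c :: complex poly)"
    have "degree C = degree c" unfolding C_def by (rule degree_map_poly) simp
    then have "\<not> constant (poly C)" using dc constant_degree by metis
    then obtain z where z: "poly C z = 0" using fundamental_theorem_of_algebra by blast
    from ca obtain h1 where h1: "gp a = c * h1" by (auto elim: dvdE)
    from cb obtain h2 where h2: "gp b = c * h2" by (auto elim: dvdE)
    have "(map_poly of_rat (gp a :: rat poly) :: complex poly) = C * map_poly of_rat h1"
      unfolding C_def h1 by (rule map_of_rat_mult)
    then have "poly (gp a) z = poly C z * poly (map_poly of_rat h1) z" by (simp add: map_of_rat_gp)
    then have za: "poly (gp a) z = 0" using z by simp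
    have "(map_poly of_rat (gp b :: rat poly) :: complex poly) = C * map_poly of_rat h2"
      unfolding C_def h2 by (rule map_of_rat_mult)
    then have "poly (gp b) z = poly C z * poly (map_poly of_rat h2) z" by (simp add: map_of_rat_gp)
    then have zb: "poly (gp b) z = 0" using z by simp
    have "z / 2 = 1"
      using unity_coprime[OF assms(1,2) gp_root_pow[OF za assms(2)] gp_root_pow[OF zb assms(3)]] .
    then have "z = 2" by simp
    then show False using za poly_gp_2[of a, where 'a=complex] assms by simp
  qed
qed


lemma prod_dvd_coprime:
  fixes G :: "'b \<Rightarrow> 'a::semiring_gcd"
  assumes "finite A" "\<And>x y. x \<in> A \<Longrightarrow> y \<in> A \<Longrightarrow> x \<noteq> y \<Longrightarrow> coprime (G x) (G y)"
    "\<And>x. x \<in> A \<Longrightarrow> G x dvd q"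
  shows "(\<Prod>x\<in>A. G x) dvd q"
  using assms
proof (induction A rule: finite_induct)
  case empty then show ?case by simp
next
  case (insert x A)
  have "coprime (G x) (\<Prod>y\<in>A. G y)"
    by (rule prod_coprime_right) (use insert in auto)
  then show ?case using insert by (simp add: divides_mult)
qed



definition T :: "nat \<Rightarrow> real \<Rightarrow> real" where
  "T n a = (\<Sum>j\<le>n. (-1)^j * real (n choose j) / (a + real j))"

lemma T_Suc: "T (Suc n) a = T n a - T n (a + 1)"
proof -
  define g where "g j = (-1)^j * real (n choose j) / (a + real j)" for j
  have "T (Suc n) a = 1 / a + (\<Sum>j\<le>n. (-1)^(Suc j) * real (Suc n choose Suc j) / (a + real (Suc j)))"
    unfolding T_def by (subst sum.atMost_Suc_shift) simp
  also have "(\<Sum>j\<le>n. (-1)^(Suc j) * real (Suc n choose Suc j) / (a + real (Suc j)))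
      = (\<Sum>j\<le>n. g (Suc j)) - (\<Sum>j\<le>n. (-1)^j * real (n choose j) / (a + 1 + real j))"
    unfolding g_def sum_subtractf[symmetric]
  proof (rule sum.cong)
    fix j assume "j \<in> {..n}"
    define D where "D = a + 1 + real j"
    have D: "a + real (Suc j) = D" unfolding D_def by simp
    have "(-1)^(Suc j) * real (Suc n choose Suc j) / (a + real (Suc j))
       = (- ((-1)^j * real (n choose j)) + (-1)^(Suc j) * real (n choose Suc j)) / D"
      unfolding D by (simp add: algebra_simps)
    also have "\<dots> = (-1)^(Suc j) * real (n choose Suc j) / D - (-1)^j * real (n choose j) / D"
      by (simp add: add_divide_distrib diff_divide_distrib)
    finally show "(-1)^(Suc j) * real (Suc n choose Suc j) / (a + real (Suc j)) =
         (-1)^(Suc j) * real (n choose Suc j) / (a + real (Suc j)) - (-1)^j * real (n choose j) / (a + 1 + real j)"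
      unfolding D D_def .
  qed simp
  also have "(\<Sum>j\<le>n. g (Suc j)) = (\<Sum>j\<le>Suc n. g j) - g 0"
    by (subst sum.atMost_Suc_shift) simp
  also have "(\<Sum>j\<le>Suc n. g j) = (\<Sum>j\<le>n. g j)" by (simp add: g_def)
  finally show ?thesis unfolding T_def g_def by simp
qed

lemma T_closed: "a > 0 \<Longrightarrow> T n a = fact n / pochhammer a (Suc n)"
proof (induction n arbitrary: a)
  case 0 then show ?case by (simp add: T_def)
next
  case (Suc n)
  define Q where "Q = pochhammer (a + 1) n"
  have Q: "Q > 0" unfolding Q_def using Suc.prems by (intro pochhammer_pos) simp
  have p1: "pochhammer a (Suc n) = a * Q" unfolding Q_def by (rule pochhammer_rec)
  have p2: "pochhammer (a+1) (Suc n) = Q * (a + 1 + real n)" unfolding Q_def by (rule pochhammer_Suc)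
  have p3: "pochhammer a (Suc (Suc n)) = a * Q * (a + 1 + real n)"
    by (simp only: pochhammer_Suc[of a "Suc n"] p1) (simp add: algebra_simps)
  have "T (Suc n) a = fact n / (a * Q) - fact n / (Q * (a + 1 + real n))"
    using Suc.prems by (simp only: T_Suc Suc.IH[of a] Suc.IH[of "a+1"] p1 p2)
  also have "\<dots> = fact (Suc n) / (a * Q * (a + 1 + real n))"
  proof -
    have gen: "c/(a*Q) - c/(Q*D) = c*(D-a)/(a*Q*D)" if "a>0" "Q>0" "D>0" for c a Q D :: real
      using that by (simp add: field_simps)
    have "a + 1 + real n > 0" using Suc.prems by simp
    then have "fact n / (a * Q) - fact n / (Q * (a + 1 + real n)) = fact n * (1 + real n) / (a * Q * (a + 1 + real n))"
      using gen[of a Q "a + 1 + real n" "fact n"] Suc.prems Q by simp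
    also have "fact n * (1 + real n) = fact (Suc n)" by (simp add: algebra_simps)
    finally show ?thesis .
  qed
  finally show ?case by (simp only: p3)
qed

lemma fact_bound: "4 ^ n * fact n * fact n \<le> (fact (2 * n + 1) :: nat)"
proof (induction n)
  case 0 then show ?case by simp
next
  case (Suc n)
  have "fact (2 * Suc n + 1) = (2*n+3) * (2*n+2) * (fact (2 * n + 1) :: nat)"
    by (simp add: algebra_simps)
  also have "\<dots> \<ge> (2*n+3) * (2*n+2) * (4 ^ n * fact n * fact n)"
    using Suc by simp
  finally have a: "(2*n+3) * (2*n+2) * (4 ^ n * fact n * fact n) \<le> (fact (2 * Suc n + 1) :: nat)" .
  have "4 ^ Suc n * fact (Suc n) * fact (Suc n) = (4*(n+1)*(n+1)) * (4 ^ n * fact n * fact n :: nat)"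
    by (simp add: algebra_simps)
  also have "\<dots> \<le> (2*n+3) * (2*n+2) * (4 ^ n * fact n * fact n)"
  proof (intro mult_right_mono)
    have "(2*n+3)*(2*n+2) = 4*(n+1)*(n+1) + 2*(n+1)" by (simp add: algebra_simps)
    then show "4*(n+1)*(n+1) \<le> (2*n+3)*(2*n+2)" by linarith
  qed simp
  finally show ?case using a by linarith
qed

lemma lcm_bound:
  fixes P n :: nat
  assumes "\<And>j. n + 1 \<le> j \<Longrightarrow> j \<le> 2 * n + 1 \<Longrightarrow> j dvd P" "P > 0"
  shows "4 ^ n \<le> P"
proof -
  define V where "V = T n (real n + 1)"
  have Vc: "V = fact n / pochhammer (real n + 1) (Suc n)"
    unfolding V_def by (rule T_closed) simp
  have fp: "fact (n + Suc n) = fact n * pochhammer (real n + 1) (Suc n)"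
  proof -
    have "(fact (n + Suc n) :: real) = pochhammer 1 (n + Suc n)" by (rule pochhammer_fact)
    also have "\<dots> = pochhammer 1 n * pochhammer (1 + real n) (Suc n)" by (rule pochhammer_product')
    also have "\<dots> = fact n * pochhammer (real n + 1) (Suc n)" by (simp add: pochhammer_fact add.commute)
    finally show ?thesis .
  qed
  have Vpos: "V > 0" unfolding Vc by (intro divide_pos_pos pochhammer_pos) auto
  have "real P * V = (\<Sum>j\<le>n. (-1)^j * real (n choose j) * real (P div (n + 1 + j)))"
    unfolding V_def T_def sum_distrib_left
  proof (rule sum.cong)
    fix j assume "j \<in> {..n}"
    then have "(n + 1 + j) dvd P" by (intro assms) auto
    then have "real (P div (n + 1 + j)) = real P / real (n + 1 + j)"
      by (simp add: real_of_nat_div)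
    then show "real P * ((-1)^j * real (n choose j) / (real n + 1 + real j)) =
        (-1)^j * real (n choose j) * real (P div (n + 1 + j))" by (auto simp: field_simps)
  qed simp
  also have "\<dots> = of_int (\<Sum>j\<le>n. (-1)^j * int (n choose j) * int (P div (n + 1 + j)))"
    by simp
  finally have eq: "real P * V = of_int (\<Sum>j\<le>n. (-1)^j * int (n choose j) * int (P div (n + 1 + j)))" .
  have "real P * V > 0" using Vpos assms by simp
  then have "0 < (\<Sum>j\<le>n. (-1)^j * int (n choose j) * int (P div (n + 1 + j)))"
    by (simp only: eq of_int_0_less_iff)
  then have "1 \<le> (\<Sum>j\<le>n. (-1)^j * int (n choose j) * int (P div (n + 1 + j)))"
    by linarith
  then have "real P * V \<ge> 1" unfolding eq by (simp only: of_int_1_le_iff)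
  have e: "2 * n + 1 = n + Suc n" by simp
  define R where "R = pochhammer (real n + 1) (Suc n)"
  have R: "R > 0" unfolding R_def by (intro pochhammer_pos) simp
  have "real P * fact n / R \<ge> 1" using \<open>real P * V \<ge> 1\<close> unfolding Vc R_def[symmetric] by simp
  then have "real P * fact n \<ge> R" using R by (simp add: field_simps)
  then have "real P * fact n * fact n \<ge> R * fact n" by (simp add: mult_right_mono)
  also have "R * fact n = fact (2 * n + 1)" unfolding e R_def fp by (rule mult.commute)
  finally have c1: "real P * fact n * fact n \<ge> fact (2 * n + 1)" .
  have c2: "real (4 ^ n * fact n * fact n) \<le> real (fact (2 * n + 1))"
    using fact_bound[of n] by linarith
  have A: "real (4 ^ n) * (fact n * fact n) \<le> real P * (fact n * fact n)"
  proof -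
    have "real (4 ^ n) * (fact n * fact n) = real (4 ^ n * fact n * fact n)"
      by (simp only: of_nat_mult of_nat_fact mult.assoc)
    also have "\<dots> \<le> real (fact (2 * n + 1))" by (rule c2)
    also have "\<dots> = fact (2 * n + 1)" by (rule of_nat_fact)
    also have "\<dots> \<le> real P * fact n * fact n" by (rule c1)
    finally show ?thesis by (simp only: mult.assoc)
  qed
  have "(fact n * fact n :: real) > 0" by simp
  then have "real (4 ^ n) \<le> real P" using mult_right_le_imp_le[OF A] by blast
  then show ?thesis by linarith
qed



definition ex :: "nat \<Rightarrow> nat \<Rightarrow> nat" where "ex N p = Max {e. p ^ e \<le> N}"

lemma ex_fin: "prime (p::nat) \<Longrightarrow> finite {e. p ^ e \<le> (N::nat)}"
proof -
  assume p: "prime p"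
  have "{e. p ^ e \<le> N} \<subseteq> {..N}"
  proof
    fix e assume "e \<in> {e. p ^ e \<le> N}"
    then have "p ^ e \<le> N" by simp
    moreover have "e < 2 ^ e" by (rule less_exp)
    moreover have "2 ^ e \<le> p ^ e" using prime_ge_2_nat[OF p] by (rule power_mono) simp
    ultimately have "e \<le> N" by linarith
    then show "e \<in> {..N}" by simp
  qed
  then show ?thesis using finite_subset by blast
qed

lemma ex_le: "prime p \<Longrightarrow> N \<ge> 1 \<Longrightarrow> p ^ ex N p \<le> N"
proof -
  assume "prime p" "N \<ge> 1"
  then have "0 \<in> {e. p ^ e \<le> N}" by simp
  then have "{e. p ^ e \<le> N} \<noteq> {}" by blast
  from Max_in[OF ex_fin[OF \<open>prime p\<close>] this] show ?thesis unfolding ex_def by simp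
qed

lemma ex_max: "prime p \<Longrightarrow> p ^ e \<le> N \<Longrightarrow> e \<le> ex N p"
  unfolding ex_def by (rule Max_ge[OF ex_fin]) auto

lemma K_ge3: "prime p \<Longrightarrow> p \<le> N \<Longrightarrow> 4 \<le> N \<Longrightarrow> 3 \<le> p ^ ex N p"
proof -
  assume p: "prime p" "p \<le> N" "4 \<le> N"
  show ?thesis
  proof (cases "p = 2")
    case True
    have "2 \<le> ex N p" using ex_max[OF p(1), of 2 N] p True by simp
    then have "p ^ 2 \<le> p ^ ex N p" using True by (intro power_increasing) auto
    then show ?thesis using True by simp
  next
    case False
    then have "p \<ge> 3" using prime_ge_2_nat[OF p(1)] by linarith
    have "1 \<le> ex N p" using ex_max[OF p(1), of 1 N] p by simp
    then have "p ^ 1 \<le> p ^ ex N p" using \<open>p \<ge> 3\<close> by (intro power_increasing) auto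
    then show ?thesis using \<open>p \<ge> 3\<close> by simp
  qed
qed

lemma K_coprime: "prime p \<Longrightarrow> prime q \<Longrightarrow> p \<noteq> q \<Longrightarrow> coprime (p ^ ex N p) (q ^ ex N q)"
  by (simp add: primes_coprime)

lemma dvd_prodK:
  assumes "1 \<le> j" "j \<le> N"
  shows "j dvd (\<Prod>p\<in>{p. prime p \<and> p \<le> N}. p ^ ex N p)"
proof -
  have j: "j = (\<Prod>p\<in>prime_factors j. p ^ multiplicity p j)"
    using assms by (intro prime_factorization_nat) simp
  have "(\<Prod>p\<in>prime_factors j. p ^ multiplicity p j) dvd (\<Prod>p\<in>prime_factors j. p ^ ex N p)"
  proof (rule prod_dvd_prod)
    fix p assume pj: "p \<in> prime_factors j"
    then have pp: "prime p" by auto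
    have "p ^ multiplicity p j \<le> j"
      using multiplicity_dvd[of p j] assms by (intro dvd_imp_le) auto
    then have "multiplicity p j \<le> ex N p" using assms by (intro ex_max[OF pp]) auto
    then show "p ^ multiplicity p j dvd p ^ ex N p" by (rule le_imp_power_dvd)
  qed
  also have "\<dots> dvd (\<Prod>p\<in>{p. prime p \<and> p \<le> N}. p ^ ex N p)"
  proof (rule prod_dvd_prod_subset)
    show "finite {p. prime p \<and> p \<le> N}" by simp
    show "prime_factors j \<subseteq> {p. prime p \<and> p \<le> N}"
    proof
      fix p assume "p \<in> prime_factors j"
      then have "prime p" "p dvd j" by auto
      then have "p \<le> j" using assms by (intro dvd_imp_le) auto
      then show "p \<in> {p. prime p \<and> p \<le> N}" using \<open>prime p\<close> assms by simp
    qed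
  qed
  finally show ?thesis using j by simp
qed



lemma diff_dvd_pow: "(x::'a::comm_ring_1) - y dvd x ^ n - y ^ n"
proof (induction n)
  case 0 then show ?case by simp
next
  case (Suc n)
  have "x ^ Suc n - y ^ Suc n = x * (x ^ n - y ^ n) + (x - y) * y ^ n" by (simp add: algebra_simps)
  moreover have "x - y dvd x * (x ^ n - y ^ n)" using Suc by (rule dvd_mult)
  moreover have "x - y dvd (x - y) * y ^ n" by (rule dvd_triv_left)
  ultimately show ?case by (metis dvd_add)
qed

lemma gp_dvd_binom:
  assumes "k dvd M"
  shows "(gp k :: 'a::comm_ring_1 poly) dvd monom 1 M - [:2 ^ M:]"
proof -
  obtain t where t: "M = k * t" using assms by blast
  have "gp k dvd ([:-2, 1:] * (gp k :: 'a poly))" by (rule dvd_triv_right)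
  also have "\<dots> = monom 1 k - [:2 ^ k:]" by (rule gp_ident)
  also have "\<dots> dvd (monom 1 k) ^ t - [:2 ^ k:] ^ t" by (rule diff_dvd_pow)
  also have "(monom 1 k) ^ t - [:2 ^ k:] ^ t = (monom 1 M - [:(2::'a) ^ M:])"
    by (simp add: monom_power poly_const_pow t power_mult)
  finally show ?thesis .
qed

lemma prod_coeff_nonneg:
  "(\<And>x i. x \<in> A \<Longrightarrow> coeff (g x) i \<ge> 0) \<Longrightarrow> coeff (\<Prod>x\<in>A. g x :: int poly) i \<ge> 0"
proof (induction A arbitrary: i rule: infinite_finite_induct)
  case (insert x A)
  then show ?case by (auto simp: coeff_mult intro!: sum_nonneg mult_nonneg_nonneg)
qed auto

lemma coeff_le_poly1:
  assumes "\<And>i. coeff (p :: int poly) i \<ge> 0"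
  shows "coeff p i \<le> poly p 1"
proof (cases "i \<le> degree p")
  case True
  have "coeff p i \<le> (\<Sum>j\<le>degree p. coeff p j)"
    by (rule member_le_sum) (use True assms in auto)
  then show ?thesis by (simp add: poly_altdef)
next
  case False
  then have "coeff p i = 0" by (simp add: coeff_eq_0)
  moreover have "0 \<le> poly p 1" unfolding poly_altdef using assms by (auto intro: sum_nonneg)
  ultimately show ?thesis by simp
qed

lemma poly_gp_1: "poly (gp k :: int poly) 1 = 2 ^ k - 1"
  using poly_gp_root[of k "1::int"] by simp

lemma map_of_rat_binom:
  "map_poly (of_rat :: rat \<Rightarrow> 'a::field_char_0) (monom 1 m - [:a:]) = monom 1 m - [:of_rat a:]"
  by (rule poly_eqI) (auto simp: coeff_map_poly coeff_monom coeff_pCons of_rat_diff split: nat.split)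

lemma pow_bound: "9 * 3 ^ (t + 8) < (4::nat) ^ (t + 8)"
proof (induction t)
  case 0 then show ?case by simp
next
  case (Suc t)
  have "9 * 3 ^ (Suc t + 8) = 3 * (9 * (3::nat) ^ (t + 8))" by (simp only: add_Suc power_Suc)
  also have "\<dots> < 3 * 4 ^ (t + 8)" using Suc by simp
  also have "\<dots> \<le> 4 * 4 ^ (t + 8)" by simp
  also have "\<dots> = 4 ^ (Suc t + 8)" by (simp only: add_Suc power_Suc)
  finally show ?case .
qed

lemma unity_dvd:
  fixes k m :: nat
  assumes "cis (2 * pi / real k) ^ m = 1" "k > 0"
  shows "k dvd m"
proof -
  have "cis (real m * (2 * pi / real k)) = 1" using assms DeMoivre by metis
  then obtain n :: int where n: "real m * (2 * pi / real k) = of_int n * (2 * pi)"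
    using cis_eq_1_iff by blast
  then have "real m = of_int n * real k" using assms pi_gt_zero by (simp add: field_simps)
  then have "int m = n * int k" by (metis of_int_eq_iff of_int_mult of_int_of_nat_eq)
  then have "int k dvd int m" by simp
  then show ?thesis by simp
qed

lemma cis_ne1:
  fixes k :: nat
  assumes "real k > j" "j > 0"
  shows "cis (2 * pi * j / real k) \<noteq> 1"
proof
  assume "cis (2 * pi * j / real k) = 1"
  then obtain n :: int where n: "2 * pi * j / real k = of_int n * (2 * pi)"
    using cis_eq_1_iff by blast
  then have n': "j = of_int n * real k" using assms pi_gt_zero by (simp add: field_simps)
  show False
  proof (cases "n \<ge> 1")
    case True
    then have "real_of_int n * real k \<ge> 1 * real k" by (intro mult_right_mono) auto
    then show False using n' assms by linarith
  next
    case False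
    then have "n \<le> 0" by simp
    then have "real_of_int n * real k \<le> 0" by (simp add: mult_nonpos_nonneg)
    then show False using n' assms by linarith
  qed
qed



lemma gp_root: "z ^ k = 2 ^ k \<Longrightarrow> z \<noteq> 2 \<Longrightarrow> poly (gp k :: complex poly) z = 0"
  using poly_gp_root[of k z] by simp

lemma binom_root_dvd:
  fixes k m :: nat and a :: complex and G :: "complex poly"
  assumes k3: "k \<ge> 3" and gG: "gp k dvd G" and Gb: "G dvd monom 1 m - [:a:]"
  shows "k dvd m"
proof -
  have root: "z ^ m = a" if "poly (gp k) z = 0" for z
  proof -
    have "gp k dvd monom 1 m - [:a:]" using gG Gb by (rule dvd_trans)
    then obtain h where "monom 1 m - [:a:] = gp k * h" by blast
    then have "poly (monom 1 m - [:a:]) z = poly (gp k) z * poly h z" by simp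
    then show ?thesis using that by (simp add: poly_monom)
  qed
  define w where "w = cis (2 * pi / real k)"
  have kpos: "real k > 0" using k3 by simp
  have wk: "w ^ k = 1" unfolding w_def DeMoivre using kpos by simp
  have w1: "w \<noteq> 1" unfolding w_def using cis_ne1[of 1 k] k3 by simp
  have w2: "w ^ 2 \<noteq> 1" unfolding w_def DeMoivre using cis_ne1[of 2 k] k3 by (simp add: mult.commute)
  have w2k: "(w ^ 2) ^ k = 1" using wk by (metis power_mult power_mult_distrib mult.commute power_one)
  have z1: "(2 * w) ^ m = a"
    by (rule root, rule gp_root) (use wk w1 in \<open>auto simp: power_mult_distrib\<close>)
  have z2: "(2 * w ^ 2) ^ m = a"
    by (rule root, rule gp_root) (use w2k w2 in \<open>auto simp: power_mult_distrib\<close>)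
  have "2 ^ m * w ^ m = 2 ^ m * (w ^ m) ^ 2"
    using z1 z2 by (simp add: power_mult_distrib power_mult[symmetric] mult.commute)
  then have e: "w ^ m = (w ^ m) ^ 2" by simp
  have "w \<noteq> 0" unfolding w_def by (metis cis_neq_zero)
  then have "w ^ m \<noteq> 0" by simp
  then have "w ^ m = 1" using e \<open>w \<noteq> 0\<close> by (simp add: power2_eq_square)
  then show ?thesis using unity_dvd[of k m] k3 unfolding w_def by simp
qed



theorem theorem3p7:
  fixes d :: nat
  assumes "d \<ge> 841"
  shows "\<exists>f :: int poly. f \<noteq> 0
           \<and> real (degree f) \<le> real d * ln (real d)
           \<and> real_of_rat (poly_height (map_poly of_int f)) \<le> exp (2 * real d * ln (real d))
           \<and> (\<exists>m a. binomial_multiple (map_poly of_int f) m a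
                  \<and> (\<forall>m' a'. binomial_multiple (map_poly of_int f) m' a' \<longrightarrow> m \<le> m')
                  \<and> real m > exp (sqrt (real d))
                  \<and> real_of_int (rat_height a) > 2 powr exp (sqrt (real d)))"
proof -
  define s where "s = nat \<lfloor>sqrt (real d)\<rfloor>"
  have sqd: "sqrt (real d) \<ge> 29"
  proof -
    have "(29::real) = sqrt (29 ^ 2)" by simp
    also have "\<dots> \<le> sqrt (real d)" using assms by (intro real_sqrt_le_mono) simp
    finally show ?thesis .
  qed
  have s1: "real s \<le> sqrt (real d)" "sqrt (real d) < real s + 1"
    unfolding s_def using sqd by linarith+
  have s29: "s \<ge> 29" unfolding s_def using sqd by linarith
  have "real (s * s) \<le> real d"
  proof -
    have "real s * real s \<le> sqrt (real d) * sqrt (real d)" using s1 by (intro mult_mono) auto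
    then show ?thesis by simp
  qed
  then have ssd: "s * s \<le> d" by linarith
  define N where "N = 2 * s"
  define n where "n = s - 1"
  define Pr where "Pr = {p::nat. prime p \<and> p \<le> N}"
  define K where "K p = p ^ ex N p" for p
  define M where "M = (\<Prod>p\<in>Pr. K p)"
  have N4: "N \<ge> 4" unfolding N_def using s29 by simp
  have finPr: "finite Pr" unfolding Pr_def by simp
  have Kge: "K p \<ge> 3" if "p \<in> Pr" for p using that K_ge3 N4 unfolding Pr_def K_def by auto
  have Kle: "K p \<le> N" if "p \<in> Pr" for p using that ex_le N4 unfolding Pr_def K_def by auto
  have Kcop: "coprime (K p) (K q)" if "p \<in> Pr" "q \<in> Pr" "p \<noteq> q" for p q
    using that K_coprime unfolding Pr_def K_def by auto
  have Mpos: "M > 0" unfolding M_def using Kge finPr by (intro prod_pos) (auto intro: order.strict_trans2[of 0 3])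
  have M4: "4 ^ n \<le> M"
  proof (rule lcm_bound[OF _ Mpos])
    fix j assume "n + 1 \<le> j" "j \<le> 2 * n + 1"
    then have "1 \<le> j" "j \<le> N" unfolding n_def N_def using s29 by auto
    then show "j dvd M" unfolding M_def K_def Pr_def by (rule dvd_prodK)
  qed
  have Mbig: "real M > exp (sqrt (real d))"
  proof -
    have "exp (sqrt (real d)) < exp (real (s + 1))" using s1 by simp
    also have "exp (real (s + 1)) = exp 1 ^ (s + 1)" using exp_of_nat_mult[of "s+1" 1] by simp
    also have "\<dots> \<le> 3 ^ (s + 1)" by (intro power_mono exp_le) simp
    also have "(3::real) ^ (s + 1) < 4 ^ n"
    proof -
      define t where "t = s - 10"
      have "s + 1 = t + 8 + 3" "n = t + 8 + 1" using s29 unfolding n_def t_def by auto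
      then have "(3::nat) ^ (s + 1) = 27 * 3 ^ (t + 8)" "(4::nat) ^ n = 4 * 4 ^ (t + 8)" by (simp_all add: power_add)
      then have "(3::nat) ^ (s + 1) < 4 ^ n" using pow_bound[of t] by linarith
      then show ?thesis by (metis of_nat_less_iff of_nat_numeral of_nat_power)
    qed
    also have "\<dots> \<le> real M" using M4 by (metis of_nat_le_iff of_nat_numeral of_nat_power)
    finally show ?thesis .
  qed
  define f :: "int poly" where "f = (\<Prod>p\<in>Pr. gp (K p))"
  define F :: "rat poly" where "F = map_poly of_int f"
  have Kpos: "K p > 0" if "p \<in> Pr" for p using Kge[OF that] by simp
  have KSuc: "K p = Suc (K p - 1)" if "p \<in> Pr" for p using Kpos[OF that] by simp
  have F_eq: "F = (\<Prod>p\<in>Pr. gp (K p))" unfolding F_def f_def by (simp add: map_of_int_prod map_of_int_gp)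
  have fnz: "f \<noteq> 0" unfolding f_def using finPr gp_nz Kpos by (auto simp: prod_zero_iff)
  have degf: "degree f = (\<Sum>p\<in>Pr. K p - 1)" unfolding f_def
  proof (subst degree_prod_eq_sum_degree)
    show "\<forall>p\<in>Pr. (gp (K p) :: int poly) \<noteq> 0" using gp_nz Kpos by auto
    show "(\<Sum>p\<in>Pr. degree (gp (K p) :: int poly)) = (\<Sum>p\<in>Pr. K p - 1)"
    proof (rule sum.cong)
      fix p assume "p \<in> Pr"
      then show "degree (gp (K p) :: int poly) = K p - 1" using degree_gp[of "K p - 1"] KSuc by metis
    qed simp
  qed
  have cardPr: "card Pr \<le> N"
  proof -
    have "Pr \<subseteq> {1..N}" unfolding Pr_def using prime_ge_1_nat by auto
    then have "card Pr \<le> card {1..N}" by (intro card_mono) auto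
    then show ?thesis by simp
  qed
  have sumK: "(\<Sum>p\<in>Pr. K p) \<le> N * N"
  proof -
    have "(\<Sum>p\<in>Pr. K p) \<le> card Pr * N" using sum_bounded_above[of Pr K N] Kle by simp
    also have "\<dots> \<le> N * N" using cardPr by simp
    finally show ?thesis .
  qed
  have NN: "N * N \<le> 4 * d" unfolding N_def using ssd by simp
  have ln4: "ln (real d) \<ge> 4"
  proof -
    have "exp (4::real) = exp 1 ^ 4" using exp_of_nat_mult[of 4 1] by simp
    also have "\<dots> \<le> 3 ^ 4" by (intro power_mono exp_le) simp
    also have "\<dots> \<le> real d" using assms by simp
    finally show ?thesis using assms by (subst ln_ge_iff) auto
  qed
  have deg_bound: "real (degree f) \<le> real d * ln (real d)"
  proof -
    have "degree f \<le> (\<Sum>p\<in>Pr. K p)" unfolding degf by (intro sum_mono) simp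
    then have "degree f \<le> 4 * d" using sumK NN by linarith
    then have "real (degree f) \<le> real d * 4" by simp
    also have "\<dots> \<le> real d * ln (real d)" using ln4 by (intro mult_left_mono) auto
    finally show ?thesis .
  qed
  have Fnz: "F \<noteq> 0" unfolding F_def using fnz by (simp add: map_poly_eq_0_iff)
  have leadF: "lead_coeff F = 1" unfolding F_eq lead_coeff_prod
  proof (intro prod.neutral ballI)
    fix p assume "p \<in> Pr"
    then have "gp (K p) = (gp (Suc (K p - 1)) :: rat poly)" using KSuc by metis
    then show "lead_coeff (gp (K p) :: rat poly) = 1" by (simp only: lead_coeff_gp)
  qed
  have coeffF: "coeff F i = of_int (coeff f i)" for i unfolding F_def by (simp add: coeff_map_poly)
  have least: "(LEAST r::rat. 0 < r \<and> (\<forall>i. coeff (smult r F) i \<in> \<int>)) = 1"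
  proof (rule Least_equality)
    show "0 < (1::rat) \<and> (\<forall>i. coeff (smult 1 F) i \<in> \<int>)" by (simp add: coeffF)
    fix y :: rat assume y: "0 < y \<and> (\<forall>i. coeff (smult y F) i \<in> \<int>)"
    then have "y \<in> \<int>" using leadF by (metis coeff_smult mult.right_neutral)
    then obtain z where z: "y = of_int z" by (auto elim: Ints_cases)
    then have "z > 0" using y by simp
    then show "1 \<le> y" using z by simp
  qed
  have fcoef_nn: "coeff f i \<ge> 0" for i unfolding f_def by (rule prod_coeff_nonneg) (rule gp_coeff_nonneg)
  have poly1: "poly f 1 \<le> 2 ^ (N * N)"
  proof -
    have "poly f 1 = (\<Prod>p\<in>Pr. 2 ^ K p - 1)" unfolding f_def poly_prod poly_gp_1 ..
    also have "\<dots> \<le> (\<Prod>p\<in>Pr. 2 ^ K p)" by (intro prod_mono) auto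
    also have "\<dots> = 2 ^ (\<Sum>p\<in>Pr. K p)" by (simp add: power_sum)
    also have "\<dots> \<le> 2 ^ (N * N)" using sumK by (intro power_increasing) auto
    finally show ?thesis .
  qed
  have hF: "poly_height F \<le> 2 ^ (N * N)"
  proof -
    have "poly_height F = Max (abs ` set (coeffs F))" unfolding poly_height_def least by simp
    also have "\<dots> \<le> 2 ^ (N * N)"
    proof (subst Max_le_iff)
      show "finite (abs ` set (coeffs F))" by simp
      show "abs ` set (coeffs F) \<noteq> {}" using Fnz by simp
      show "\<forall>x\<in>abs ` set (coeffs F). x \<le> 2 ^ (N * N)"
      proof
        fix x assume "x \<in> abs ` set (coeffs F)"
        then obtain i where x: "x = abs (coeff F i)" by (auto simp: coeffs_def split: if_splits)
        have "coeff f i \<le> 2 ^ (N * N)" using coeff_le_poly1[OF fcoef_nn, of i] poly1 by linarith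
        then have "abs (coeff f i) \<le> 2 ^ (N * N)" using fcoef_nn[of i] by simp
        then have "(of_int (abs (coeff f i)) :: rat) \<le> of_int (2 ^ (N * N))" by (rule of_int_le_iff[THEN iffD2])
        then show "x \<le> 2 ^ (N * N)" unfolding x coeffF by simp
      qed
    qed
    finally show ?thesis .
  qed
  have height_bound: "real_of_rat (poly_height F) \<le> exp (2 * real d * ln (real d))"
  proof -
    have "real_of_rat (poly_height F) \<le> real_of_rat (2 ^ (N * N))" using hF of_rat_less_eq by blast
    also have "\<dots> = real (2 ^ (N * N))" by (simp add: of_rat_power)
    also have "\<dots> \<le> real (2 ^ (4 * d))" using NN by (subst of_nat_le_iff) (intro power_increasing, auto)
    also have "(2::nat) ^ (4 * d) = 16 ^ d" by (simp add: power_mult)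
    also have "(16::nat) ^ d \<le> (d * d) ^ d"
    proof (rule power_mono)
      have "16 \<le> d" using assms by simp
      then show "16 \<le> d * d" using assms by (metis le_trans le_square)
    qed simp
    also have "real ((d * d) ^ d) = exp (2 * real d * ln (real d))"
    proof -
      have "exp (2 * real d * ln (real d)) = exp (real (2 * d) * ln (real d))" by simp
      also have "\<dots> = exp (ln (real d)) ^ (2 * d)" by (rule exp_of_nat_mult)
      also have "\<dots> = real d ^ (2 * d)" using assms by simp
      also have "\<dots> = real ((d * d) ^ d)" by (simp add: power_mult power2_eq_square)
      finally show ?thesis by simp
    qed
    finally show ?thesis by simp
  qed
  have KdvdM: "K p dvd M" if "p \<in> Pr" for p unfolding M_def using finPr that by (rule dvd_prodI)
  have bm: "binomial_multiple F M (2 ^ M)"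
    unfolding binomial_multiple_def
  proof
    show "1 \<le> M" using Mpos by simp
    show "F dvd monom 1 M - [:2 ^ M:]" unfolding F_eq
    proof (rule prod_dvd_coprime[OF finPr])
      fix p q assume "p \<in> Pr" "q \<in> Pr" "p \<noteq> q"
      then show "coprime (gp (K p) :: rat poly) (gp (K q))"
        using Kcop Kpos by (intro gp_coprime) auto
    next
      fix p assume "p \<in> Pr"
      then show "(gp (K p) :: rat poly) dvd monom 1 M - [:2 ^ M:]" using KdvdM by (intro gp_dvd_binom)
    qed
  qed
  have Gmap: "(map_poly of_rat F :: complex poly) = (\<Prod>p\<in>Pr. gp (K p))"
  proof -
    have "(map_poly of_rat F :: complex poly) = map_poly (of_rat \<circ> of_int) f"
      unfolding F_def by (simp add: map_poly_map_poly)
    also have "of_rat \<circ> of_int = (of_int :: int \<Rightarrow> complex)" by (simp add: fun_eq_iff)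
    finally show ?thesis unfolding f_def by (simp add: map_of_int_prod map_of_int_gp)
  qed
  have minimal: "M \<le> m'" if "binomial_multiple F m' a'" for m' a'
  proof -
    from that have m1: "m' \<ge> 1" and dv: "F dvd monom 1 m' - [:a':]" unfolding binomial_multiple_def by auto
    from dv obtain h where h: "monom 1 m' - [:a':] = F * h" by blast
    have Gdvd: "(map_poly of_rat F :: complex poly) dvd monom 1 m' - [:of_rat a':]"
    proof
      show "monom 1 m' - [:of_rat a':] = (map_poly of_rat F :: complex poly) * map_poly of_rat h"
        using arg_cong[OF h, of "map_poly (of_rat :: rat \<Rightarrow> complex)"]
        by (simp only: map_of_rat_binom map_of_rat_mult)
    qed
    have "K p dvd m'" if "p \<in> Pr" for p
    proof (rule binom_root_dvd[OF Kge[OF that] _ Gdvd])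
      show "gp (K p) dvd (map_poly of_rat F :: complex poly)" unfolding Gmap using finPr that by (rule dvd_prodI)
    qed
    then have "M dvd m'" unfolding M_def using Kcop by (intro prod_dvd_coprime[OF finPr]) auto
    then show ?thesis using m1 by (intro dvd_imp_le) auto
  qed
  have rh: "rat_height (2 ^ M) = 2 ^ M"
  proof -
    have "(2::rat) ^ M = of_int (2 ^ M)" by simp
    then have "quotient_of ((2::rat) ^ M) = (2 ^ M, 1)" by (simp only: quotient_of_rat_of_int)
    then show ?thesis unfolding rat_height_def by simp
  qed
  have hbig: "real_of_int (rat_height (2 ^ M)) > 2 powr exp (sqrt (real d))"
  proof -
    have "2 powr exp (sqrt (real d)) < 2 powr real M" using Mbig by (intro powr_less_mono) auto
    also have "\<dots> = real_of_int (rat_height (2 ^ M))" unfolding rh by (simp add: powr_realpow)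
    finally show ?thesis .
  qed
  show ?thesis
    using fnz deg_bound height_bound bm minimal Mbig hbig unfolding F_def by blast
qed


end
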